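(* Let $X$ be a real normed linear space and let $\varepsilon\in[0,2)$. (1) If $X^*$ is $\varepsilon$-smooth, then $X$ is $\varepsilon$-rotund. (2) If $X^*$ is $\varepsilon$-rotund, then $X$ is $\varepsilon$-smooth. (3) If $X$ is reflexive, then $X$ is $\varepsilon$-smooth if and only if $X^*$ is $\varepsilon$-rotund, and $X$ is $\varepsilon$-rotund if and only if $X^*$ is $\varepsilon$-smooth.
   Context: For a normed space $Z$ and $z\in Z\setminus\{\theta\}$, $J(z)=\{\phi\in S_{Z^*}:\phi(z)=\|z\|\}$; $Z$ is $\varepsilon$-smooth if $\operatorname{diam}J(z)=\sup_{\phi,\psi\in J(z)}\|\phi-\psi\|\le\varepsilon$ for every $z\in S_Z$. $Z$ is $\varepsilon$-rotund if for every $\phi\in S_{Z^*}$, $\operatorname{diam}\{z\in S_Z:\phi(z)=1\}\le\varepsilon$. These notions are applied to $X$ and to its dual $X^*$ (whose dual is $X^{**}$). *)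

theory Defs
  imports "HOL-Analysis.Analysis"
begin

(* The dual of 'a is the type of bounded linear functionals 'a =>L real, operator norm. *)

definition duality_set :: "'a::real_normed_vector \<Rightarrow> ('a \<Rightarrow>\<^sub>L real) set" where
  "duality_set z = {\<phi>. norm \<phi> = 1 \<and> blinfun_apply \<phi> z = norm z}"

definition eps_smooth :: "real \<Rightarrow> 'a::real_normed_vector itself \<Rightarrow> bool" where
  "eps_smooth \<epsilon> _ \<longleftrightarrow> (\<forall>z::'a. norm z = 1 \<longrightarrow> diameter (duality_set z) \<le> \<epsilon>)"

definition eps_rotund :: "real \<Rightarrow> 'a::real_normed_vector itself \<Rightarrow> bool" where
  "eps_rotund \<epsilon> _ \<longleftrightarrow>
     (\<forall>\<phi>::'a \<Rightarrow>\<^sub>L real. norm \<phi> = 1 \<longrightarrow>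
        diameter {z::'a. norm z = 1 \<and> blinfun_apply \<phi> z = 1} \<le> \<epsilon>)"

definition canon_embed :: "'a::real_normed_vector \<Rightarrow> (('a \<Rightarrow>\<^sub>L real) \<Rightarrow>\<^sub>L real)" where
  "canon_embed x = Blinfun (\<lambda>f. blinfun_apply f x)"

definition reflexive_space :: "'a::real_normed_vector itself \<Rightarrow> bool" where
  "reflexive_space _ \<longleftrightarrow> surj (canon_embed :: 'a \<Rightarrow> _)"

end

theory Submission
  imports Defs
begin


definition lgraph :: "'a::real_normed_vector \<Rightarrow> ('a \<times> real) set \<Rightarrow> bool" where
  "lgraph x G \<longleftrightarrow> (0,0) \<in> G
     \<and> (\<forall>u a w b. (u,a) \<in> G \<longrightarrow> (w,b) \<in> G \<longrightarrow> (u + w, a + b) \<in> G)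
     \<and> (\<forall>u a t. (u,a) \<in> G \<longrightarrow> (t *\<^sub>R u, t * a) \<in> G)
     \<and> (\<forall>u a. (u,a) \<in> G \<longrightarrow> a \<le> norm u)
     \<and> (x, norm x) \<in> G"

lemma lgraph_extend:
  fixes x y :: "'a::real_normed_vector"
  assumes M: "lgraph x M" and ny: "\<And>c. (y,c) \<notin> M"
  shows "\<exists>M'. lgraph x M' \<and> M \<subseteq> M' \<and> M' \<noteq> M"
proof -
  have add: "\<And>u a w b. (u,a) \<in> M \<Longrightarrow> (w,b) \<in> M \<Longrightarrow> (u + w, a + b) \<in> M"
    and scl: "\<And>u a t. (u,a) \<in> M \<Longrightarrow> (t *\<^sub>R u, t * a) \<in> M"
    and dom: "\<And>u a. (u,a) \<in> M \<Longrightarrow> a \<le> norm u"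
    and z: "(0,0) \<in> M" and xx: "(x, norm x) \<in> M"
    using M unfolding lgraph_def by blast+
  have key: "a - norm (u - y) \<le> norm (w + y) - b" if "(u,a) \<in> M" "(w,b) \<in> M" for u a w b
  proof -
    have "a + b \<le> norm (u + w)" using dom[OF add[OF that]] .
    also have "u + w = (u - y) + (w + y)" by simp
    also have "norm \<dots> \<le> norm (u - y) + norm (w + y)" by (rule norm_triangle_ineq)
    finally show ?thesis by simp
  qed
  define S where "S = {a - norm (u - y) | u a. (u,a) \<in> M}"
  define c where "c = Sup S"
  have Sne: "S \<noteq> {}" using z unfolding S_def by blast
  have Sbdd: "bdd_above S" unfolding S_def
    using key[OF _ z] by (intro bdd_aboveI[where M="norm y"]) auto
  have c_up: "a - norm (u - y) \<le> c" if "(u,a) \<in> M" for u a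
    unfolding c_def by (rule cSup_upper[OF _ Sbdd]) (use that S_def in blast)
  have c_lo: "c \<le> norm (w + y) - b" if "(w,b) \<in> M" for w b
    unfolding c_def by (rule cSup_least[OF Sne]) (use key that S_def in blast)
  define M' where "M' = {(u + t *\<^sub>R y, a + t * c) | u a t. (u,a) \<in> M}"
  have memI: "(u + t *\<^sub>R y, a + t * c) \<in> M'" if "(u,a) \<in> M" for u a t
    using that unfolding M'_def by blast
  have dom': "a + t * c \<le> norm (u + t *\<^sub>R y)" if "(u,a) \<in> M" for u a t
  proof (cases "t = 0")
    case True then show ?thesis using dom[OF that] by simp
  next
    case False
    show ?thesis
    proof (cases "t > 0")
      case True
      have "c \<le> norm (inverse t *\<^sub>R u + y) - inverse t * a"
        using c_lo[OF scl[OF that, of "inverse t"]] .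
      then have "t * c \<le> t * (norm (inverse t *\<^sub>R u + y) - inverse t * a)"
        using True by (simp add: mult_left_mono)
      also have "\<dots> = norm (t *\<^sub>R (inverse t *\<^sub>R u + y)) - a"
        using True by (simp add: right_diff_distrib)
      also have "t *\<^sub>R (inverse t *\<^sub>R u + y) = u + t *\<^sub>R y"
        using True by (simp add: scaleR_add_right)
      finally show ?thesis by simp
    next
      case False
      with \<open>t \<noteq> 0\<close> have s: "-t > 0" by simp
      have "inverse (-t) * a - norm (inverse (-t) *\<^sub>R u - y) \<le> c"
        using c_up[OF scl[OF that, of "inverse (-t)"]] .
      then have i: "(-t) * (inverse (-t) * a - norm (inverse (-t) *\<^sub>R u - y)) \<le> (-t) * c"
        using s by (simp add: mult_left_mono)
      have e1: "(-t) * (inverse (-t) * a - norm (inverse (-t) *\<^sub>R u - y))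
          = a - norm ((-t) *\<^sub>R (inverse (-t) *\<^sub>R u - y))"
        using s by (simp add: right_diff_distrib)
      have e2: "(-t) *\<^sub>R (inverse (-t) *\<^sub>R u - y) = u + t *\<^sub>R y"
        using s by (simp add: scaleR_diff_right)
      have "a - norm (u + t *\<^sub>R y) \<le> (-t) * c" using i unfolding e1 e2 .
      then show ?thesis by simp
    qed
  qed
  have "lgraph x M'"
    unfolding lgraph_def
  proof (intro conjI allI impI)
    show "(0,0) \<in> M'" using memI[OF z, of 0] by simp
    show "(x, norm x) \<in> M'" using memI[OF xx, of 0] by simp
    fix u a
    assume "(u,a) \<in> M'"
    then obtain u0 a0 t0 where e: "u = u0 + t0 *\<^sub>R y" "a = a0 + t0 * c" "(u0,a0) \<in> M"
      unfolding M'_def by blast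
    show "a \<le> norm u" using dom'[OF e(3)] e by simp
    {
      fix t
      show "(t *\<^sub>R u, t * a) \<in> M'"
        using memI[OF scl[OF e(3), of t], of "t * t0"] e
        by (simp add: scaleR_add_right algebra_simps)
    }
    {
      fix w b
      assume "(w,b) \<in> M'"
      then obtain w0 b0 s0 where f: "w = w0 + s0 *\<^sub>R y" "b = b0 + s0 * c" "(w0,b0) \<in> M"
        unfolding M'_def by blast
      show "(u + w, a + b) \<in> M'"
        using memI[OF add[OF e(3) f(3)], of "t0 + s0"] e f
        by (simp add: scaleR_add_left algebra_simps)
    }
  qed
  moreover have "M \<subseteq> M'"
  proof
    fix p assume "p \<in> M"
    then show "p \<in> M'" using memI[of "fst p" "snd p" 0] by simp
  qed
  moreover have "(y, c) \<in> M'" using memI[OF z, of 1] by simp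
  ultimately show ?thesis using ny by blast
qed

lemma hahn_banach_norming:
  fixes x :: "'a::real_normed_vector"
  shows "\<exists>f::'a \<Rightarrow>\<^sub>L real. norm f \<le> 1 \<and> blinfun_apply f x = norm x"
proof -
  define A where "A = {G. lgraph x G}"
  define G0 where "G0 = {(t *\<^sub>R x, t * norm x) | t. True}"
  have "lgraph x G0"
    unfolding lgraph_def G0_def
  proof (intro conjI allI impI)
    show "((0::'a), (0::real)) \<in> {(t *\<^sub>R x, t * norm x) |t. True}"
      by (rule CollectI, rule exI[of _ 0]) simp
    show "(x, norm x) \<in> {(t *\<^sub>R x, t * norm x) |t. True}"
      by (rule CollectI, rule exI[of _ 1]) simp
    fix u a w b t
    show "(u,a) \<in> {(t *\<^sub>R x, t * norm x) |t. True} \<Longrightarrow> a \<le> norm u"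
      by (auto simp: abs_mult intro!: mult_right_mono)
    show "(u,a) \<in> {(t *\<^sub>R x, t * norm x) |t. True} \<Longrightarrow>
          (w,b) \<in> {(t *\<^sub>R x, t * norm x) |t. True} \<Longrightarrow>
          (u + w, a + b) \<in> {(t *\<^sub>R x, t * norm x) |t. True}"
    proof -
      assume "(u,a) \<in> {(t *\<^sub>R x, t * norm x) |t. True}" "(w,b) \<in> {(t *\<^sub>R x, t * norm x) |t. True}"
      then obtain t1 t2 where "u = t1 *\<^sub>R x" "a = t1 * norm x" "w = t2 *\<^sub>R x" "b = t2 * norm x" by blast
      then show ?thesis
        by (intro CollectI exI[of _ "t1 + t2"]) (simp add: scaleR_add_left algebra_simps)
    qed
    show "(u,a) \<in> {(t *\<^sub>R x, t * norm x) |t. True} \<Longrightarrow>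
          (t *\<^sub>R u, t * a) \<in> {(t *\<^sub>R x, t * norm x) |t. True}"
    proof -
      assume "(u,a) \<in> {(t *\<^sub>R x, t * norm x) |t. True}"
      then obtain t1 where "u = t1 *\<^sub>R x" "a = t1 * norm x" by blast
      then show ?thesis
        by (intro CollectI exI[of _ "t * t1"]) simp
    qed
  qed
  then have Ane: "A \<noteq> {}" unfolding A_def by blast
  have "\<exists>M\<in>A. \<forall>X\<in>A. M \<subseteq> X \<longrightarrow> X = M"
  proof (rule subset_Zorn_nonempty[OF Ane])
    fix C assume Cne: "C \<noteq> {}" and ch: "subset.chain A C"
    have CA: "\<And>G. G \<in> C \<Longrightarrow> lgraph x G" and cmp: "\<And>G H. G \<in> C \<Longrightarrow> H \<in> C \<Longrightarrow> G \<subseteq> H \<or> H \<subseteq> G"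
      using ch unfolding subset_chain_def A_def by blast+
    obtain G1 where G1: "G1 \<in> C" using Cne by blast
    show "\<Union>C \<in> A" unfolding A_def mem_Collect_eq lgraph_def
    proof (intro conjI allI impI)
      show "(0,0) \<in> \<Union>C" using CA[OF G1] G1 unfolding lgraph_def by blast
      show "(x, norm x) \<in> \<Union>C" using CA[OF G1] G1 unfolding lgraph_def by blast
      fix u a w b t
      show "(u,a) \<in> \<Union>C \<Longrightarrow> a \<le> norm u" using CA unfolding lgraph_def by blast
      show "(u,a) \<in> \<Union>C \<Longrightarrow> (t *\<^sub>R u, t * a) \<in> \<Union>C" using CA unfolding lgraph_def by blast
      assume "(u,a) \<in> \<Union>C" "(w,b) \<in> \<Union>C"
      then obtain G H where GH: "G \<in> C" "H \<in> C" "(u,a) \<in> G" "(w,b) \<in> H" by blast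
      from cmp[OF GH(1,2)] show "(u + w, a + b) \<in> \<Union>C"
      proof
        assume "G \<subseteq> H" then show ?thesis using CA[OF GH(2)] GH unfolding lgraph_def by blast
      next
        assume "H \<subseteq> G" then show ?thesis using CA[OF GH(1)] GH unfolding lgraph_def by blast
      qed
    qed
  qed
  then obtain M where MA: "lgraph x M" and mx: "\<And>X. lgraph x X \<Longrightarrow> M \<subseteq> X \<Longrightarrow> X = M"
    unfolding A_def by blast
  have add: "\<And>u a w b. (u,a) \<in> M \<Longrightarrow> (w,b) \<in> M \<Longrightarrow> (u + w, a + b) \<in> M"
    and scl: "\<And>u a t. (u,a) \<in> M \<Longrightarrow> (t *\<^sub>R u, t * a) \<in> M"
    and dom: "\<And>u a. (u,a) \<in> M \<Longrightarrow> a \<le> norm u"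
    and xx: "(x, norm x) \<in> M"
    using MA unfolding lgraph_def by blast+
  have total: "\<exists>c. (y,c) \<in> M" for y
    using lgraph_extend[OF MA, of y] mx by blast
  define f where "f y = (SOME c. (y,c) \<in> M)" for y
  have fM: "(y, f y) \<in> M" for y unfolding f_def using total[of y] by (rule someI_ex)
  have uniq: "c = d" if "(y,c) \<in> M" "(y,d) \<in> M" for y c d
  proof -
    have "(y + (-1) *\<^sub>R y, c + (-1) * d) \<in> M" by (rule add[OF that(1) scl[OF that(2)]])
    then have 1: "c - d \<le> 0" using dom by fastforce
    have "(y + (-1) *\<^sub>R y, d + (-1) * c) \<in> M" by (rule add[OF that(2) scl[OF that(1)]])
    then have 2: "d - c \<le> 0" using dom by fastforce
    from 1 2 show ?thesis by simp
  qed
  have fval: "f y = c" if "(y,c) \<in> M" for y c using uniq[OF fM that] .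
  have fadd: "f (u + w) = f u + f w" for u w using fval[OF add[OF fM fM]] .
  have fscl: "f (t *\<^sub>R u) = t *\<^sub>R f u" for t u using fval[OF scl[OF fM]] by simp
  have fbd: "norm (f u) \<le> norm u * 1" for u
  proof -
    have "f u \<le> norm u" using dom[OF fM] .
    moreover have "f ((-1) *\<^sub>R u) \<le> norm ((-1) *\<^sub>R u)" using dom[OF fM] .
    then have "- f u \<le> norm u" using fscl[of "-1" u] by simp
    ultimately show ?thesis by simp
  qed
  have bl: "bounded_linear f" by (rule bounded_linear_intro[OF fadd fscl fbd])
  show ?thesis
  proof (intro exI conjI)
    show "norm (Blinfun f) \<le> 1"
      by (rule norm_blinfun_bound) (use fbd bounded_linear_Blinfun_apply[OF bl] in auto)
    show "blinfun_apply (Blinfun f) x = norm x"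
      using bounded_linear_Blinfun_apply[OF bl] fval[OF xx] by simp
  qed
qed


lemma canon_apply: "blinfun_apply (canon_embed x) f = blinfun_apply f x"
  unfolding canon_embed_def
  by (simp add: bounded_linear_Blinfun_apply[OF blinfun.bounded_linear_left])

lemma canon_diff: "canon_embed x - canon_embed y = canon_embed (x - y)"
  by (rule blinfun_eqI) (simp add: canon_apply minus_blinfun.rep_eq blinfun.diff_right)

lemma canon_norm: "norm (canon_embed x) = norm x"
proof (rule antisym)
  show "norm (canon_embed x) \<le> norm x"
    by (rule norm_blinfun_bound) (auto simp: canon_apply, metis norm_blinfun mult.commute real_norm_def)
  obtain f :: "'a \<Rightarrow>\<^sub>L real" where f: "norm f \<le> 1" "blinfun_apply f x = norm x"
    using hahn_banach_norming by blast
  have "norm x = norm (blinfun_apply (canon_embed x) f)" using f by (simp add: canon_apply)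
  also have "\<dots> \<le> norm (canon_embed x) * norm f" by (rule norm_blinfun)
  also have "\<dots> \<le> norm (canon_embed x)" using f(1) by (simp add: mult_left_le)
  finally show "norm x \<le> norm (canon_embed x)" .
qed

lemma bounded_sphere_sub: "bounded {z::'b::real_normed_vector. norm z = 1 \<and> P z}"
  by (rule bounded_subset[OF bounded_cball[of 0 1]]) auto

lemma diam_le_eps:
  fixes S :: "'b::real_normed_vector set"
  assumes "0 \<le> e" "\<And>x y. x \<in> S \<Longrightarrow> y \<in> S \<Longrightarrow> norm (x - y) \<le> e"
  shows "diameter S \<le> e"
  using diameter_le assms by blast

lemma part1:
  assumes e: "0 \<le> \<epsilon>" and sm: "eps_smooth \<epsilon> TYPE('a::real_normed_vector \<Rightarrow>\<^sub>L real)"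
  shows "eps_rotund \<epsilon> TYPE('a)"
  unfolding eps_rotund_def
proof (intro allI impI)
  fix \<phi> :: "'a \<Rightarrow>\<^sub>L real" assume n\<phi>: "norm \<phi> = 1"
  have D: "diameter (duality_set \<phi>) \<le> \<epsilon>" using sm n\<phi> unfolding eps_smooth_def by blast
  have bD: "bounded (duality_set \<phi>)" unfolding duality_set_def by (rule bounded_sphere_sub)
  show "diameter {z::'a. norm z = 1 \<and> blinfun_apply \<phi> z = 1} \<le> \<epsilon>"
  proof (rule diam_le_eps[OF e])
    fix x y assume x: "x \<in> {z::'a. norm z = 1 \<and> blinfun_apply \<phi> z = 1}"
      and y: "y \<in> {z::'a. norm z = 1 \<and> blinfun_apply \<phi> z = 1}"
    have xm: "canon_embed x \<in> duality_set \<phi>" and ym: "canon_embed y \<in> duality_set \<phi>"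
      using x y n\<phi> by (auto simp: duality_set_def canon_norm canon_apply)
    have "norm (x - y) = dist (canon_embed x) (canon_embed y)"
      by (simp add: dist_norm canon_diff canon_norm)
    also have "\<dots> \<le> diameter (duality_set \<phi>)" by (rule diameter_bounded_bound[OF bD xm ym])
    finally show "norm (x - y) \<le> \<epsilon>" using D by simp
  qed
qed

lemma part2:
  assumes e: "0 \<le> \<epsilon>" and ro: "eps_rotund \<epsilon> TYPE('a::real_normed_vector \<Rightarrow>\<^sub>L real)"
  shows "eps_smooth \<epsilon> TYPE('a)"
  unfolding eps_smooth_def
proof (intro allI impI)
  fix z :: 'a assume nz: "norm z = 1"
  have "duality_set z = {\<psi>. norm \<psi> = 1 \<and> blinfun_apply (canon_embed z) \<psi> = 1}"
    using nz by (auto simp: duality_set_def canon_apply)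
  moreover have "norm (canon_embed z) = 1" by (simp add: canon_norm nz)
  ultimately show "diameter (duality_set z) \<le> \<epsilon>"
    using ro unfolding eps_rotund_def by simp
qed

lemma part3a:
  assumes e: "0 \<le> \<epsilon>" and r: "reflexive_space TYPE('a::real_normed_vector)"
    and sm: "eps_smooth \<epsilon> TYPE('a)"
  shows "eps_rotund \<epsilon> TYPE('a \<Rightarrow>\<^sub>L real)"
  unfolding eps_rotund_def
proof (intro allI impI)
  fix \<Phi> :: "('a \<Rightarrow>\<^sub>L real) \<Rightarrow>\<^sub>L real" assume n: "norm \<Phi> = 1"
  obtain z :: 'a where z: "\<Phi> = canon_embed z" using r unfolding reflexive_space_def by blast
  have nz: "norm z = 1" using n z canon_norm by metis
  have "{\<psi>. norm \<psi> = 1 \<and> blinfun_apply \<Phi> \<psi> = 1} = duality_set z"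
    using nz z by (auto simp: duality_set_def canon_apply)
  then show "diameter {\<psi>. norm \<psi> = 1 \<and> blinfun_apply \<Phi> \<psi> = 1} \<le> \<epsilon>"
    using sm nz unfolding eps_smooth_def by simp
qed

lemma part3b:
  assumes e: "0 \<le> \<epsilon>" and r: "reflexive_space TYPE('a::real_normed_vector)"
    and ro: "eps_rotund \<epsilon> TYPE('a)"
  shows "eps_smooth \<epsilon> TYPE('a \<Rightarrow>\<^sub>L real)"
  unfolding eps_smooth_def
proof (intro allI impI)
  fix \<phi> :: "'a \<Rightarrow>\<^sub>L real" assume n\<phi>: "norm \<phi> = 1"
  define F where "F = {z::'a. norm z = 1 \<and> blinfun_apply \<phi> z = 1}"
  have DF: "diameter F \<le> \<epsilon>" using ro n\<phi> unfolding eps_rotund_def F_def by blast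
  have bF: "bounded F" unfolding F_def by (rule bounded_sphere_sub)
  show "diameter (duality_set \<phi>) \<le> \<epsilon>"
  proof (rule diam_le_eps[OF e])
    fix X Y assume X: "X \<in> duality_set \<phi>" and Y: "Y \<in> duality_set \<phi>"
    obtain x :: 'a where x: "X = canon_embed x" using r unfolding reflexive_space_def by blast
    obtain y :: 'a where y: "Y = canon_embed y" using r unfolding reflexive_space_def by blast
    have xF: "x \<in> F" using X x n\<phi> by (auto simp: F_def duality_set_def canon_apply canon_norm)
    have yF: "y \<in> F" using Y y n\<phi> by (auto simp: F_def duality_set_def canon_apply canon_norm)
    have "norm (X - Y) = dist x y" by (simp add: x y dist_norm canon_diff canon_norm)
    also have "\<dots> \<le> diameter F" by (rule diameter_bounded_bound[OF bF xF yF])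
    finally show "norm (X - Y) \<le> \<epsilon>" using DF by simp
  qed
qed

theorem theorem2p13:
  fixes \<epsilon> :: real
  assumes "0 \<le> \<epsilon>" and "\<epsilon> < 2"
  shows "(eps_smooth \<epsilon> TYPE('a::real_normed_vector \<Rightarrow>\<^sub>L real) \<longrightarrow> eps_rotund \<epsilon> TYPE('a))
       \<and> (eps_rotund \<epsilon> TYPE('a \<Rightarrow>\<^sub>L real) \<longrightarrow> eps_smooth \<epsilon> TYPE('a))
       \<and> (reflexive_space TYPE('a) \<longrightarrow>
            ((eps_smooth \<epsilon> TYPE('a) \<longleftrightarrow> eps_rotund \<epsilon> TYPE('a \<Rightarrow>\<^sub>L real))
             \<and> (eps_rotund \<epsilon> TYPE('a) \<longleftrightarrow> eps_smooth \<epsilon> TYPE('a \<Rightarrow>\<^sub>L real))))"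
  using part1[OF assms(1)] part2[OF assms(1)] part3a[OF assms(1)] part3b[OF assms(1)]
  by blast

end
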